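(* Let $\mathbb{F}$ be a finite field and $n\ge2$. The isolated subsemigroups of $M(n,\mathbb{F})$ are exactly: $M(n,\mathbb{F})$, $\mathrm{GL}(n,\mathbb{F})$, $I_{n-1}$, and all semigroups $S(\mathcal{A},\mathcal{B})=\{A\in M(n,\mathbb{F}) : \mathrm{Im}(A)\in\mathcal{A},\ \ker(A)\in\mathcal{B}\}$, where $\mathcal{A}$ is a nonempty set of $(n-1)$-dimensional subspaces of $\mathbb{F}^n$ and $\mathcal{B}$ is a nonempty set of $1$-dimensional subspaces of $\mathbb{F}^n$ such that $V_1\not\subseteq V_2$ for every $V_1\in\mathcal{B}$ and every $V_2\in\mathcal{A}$.
   Context: $M(n,\mathbb{F})$ is the semigroup of $n\times n$ matrices over $\mathbb{F}$ under multiplication, identified with linear operators on $\mathbb{F}^n$; $\mathrm{GL}(n,\mathbb{F})$ is its group of units; $I_{n-1}$ is the set of all matrices of rank at most $n-1$. A (nonempty) subsemigroup $T$ of a semigroup $S$ is isolated if for all $x\in S$ and positive integers $m$, $x^m\in T$ implies $x\in T$. *)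

theory Defs
  imports "HOL-Analysis.Analysis"
begin

primrec mpow :: "'a::semiring_1^'n^'n \<Rightarrow> nat \<Rightarrow> 'a^'n^'n" where
  "mpow A 0 = mat 1"
| "mpow A (Suc m) = A ** mpow A m"

definition subsemigroup_mat :: "('a::semiring_1^'n^'n) set \<Rightarrow> bool" where
  "subsemigroup_mat T \<longleftrightarrow> T \<noteq> {} \<and> (\<forall>A\<in>T. \<forall>B\<in>T. A ** B \<in> T)"

definition isolated_subsemigroup :: "('a::semiring_1^'n^'n) set \<Rightarrow> bool" where
  "isolated_subsemigroup T \<longleftrightarrow> subsemigroup_mat T \<and>
     (\<forall>X m. 0 < m \<longrightarrow> mpow X m \<in> T \<longrightarrow> X \<in> T)"

definition mat_image :: "'a::field^'n^'n \<Rightarrow> ('a^'n) set" where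
  "mat_image A = range (\<lambda>x. A *v x)"

definition mat_kernel :: "'a::field^'n^'n \<Rightarrow> ('a^'n) set" where
  "mat_kernel A = {x. A *v x = 0}"

definition S_sets :: "('a::field^'n) set set \<Rightarrow> ('a^'n) set set \<Rightarrow> ('a^'n^'n) set" where
  "S_sets \<A> \<B> = {A. mat_image A \<in> \<A> \<and> mat_kernel A \<in> \<B>}"

end

theory Submission
  imports Defs
begin

definition dotv :: "'a::field^'n \<Rightarrow> 'a^'n \<Rightarrow> 'a" where
  "dotv p x = (\<Sum>i\<in>UNIV. p$i * x$i)"

definition compf :: "'a::field^'n \<Rightarrow> 'a^'n^'n \<Rightarrow> 'a^'n" where
  "compf p A = (\<chi> j. \<Sum>i\<in>UNIV. p$i * A$i$j)"

definition outer :: "'a::field^'n \<Rightarrow> 'a^'n \<Rightarrow> 'a^'n^'n" where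
  "outer u c = (\<chi> i j. u$i * c$j)"

lemma dotv_add[simp]: "dotv p (x + y) = dotv p x + dotv p y"
  by (simp add: dotv_def distrib_left sum.distrib)
lemma dotv_diff[simp]: "dotv p (x - y) = dotv p x - dotv p y"
  by (simp add: dotv_def right_diff_distrib sum_subtractf)
lemma dotv_scale[simp]: "dotv p (c *s x) = c * dotv p x"
  by (simp add: dotv_def sum_distrib_left algebra_simps)
lemma dotv_zero[simp]: "dotv p 0 = 0"
  by (simp add: dotv_def)
lemma dotv_compf[simp]: "dotv (compf p A) x = dotv p (A *v x)"
  by (simp add: dotv_def compf_def matrix_vector_mult_def sum_distrib_left sum_distrib_right
      algebra_simps) (rule sum.swap)
lemma outer_mv[simp]: "outer u c *v x = dotv c x *s u"
  by (simp add: outer_def dotv_def matrix_vector_mult_def vec_eq_iff sum_distrib_left algebra_simps)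
lemma mv_scale[simp]: "(A::'a::field^'n^'m) *v (c *s x) = c *s (A *v x)"
  by (simp add: vec.scale)
lemma mv_add[simp]: "(A::'a::field^'n^'m) *v (x + y) = A *v x + A *v y"
  by (simp add: matrix_vector_right_distrib)
lemma mv_diff[simp]: "(A::'a::field^'n^'m) *v (x - y) = A *v x - A *v y"
  by (simp add: matrix_vector_mult_diff_distrib)
lemma mv_madd[simp]: "((A::'a::field^'n^'m) + B) *v x = A *v x + B *v x"
  by (simp add: matrix_vector_mult_add_rdistrib)
lemma mv_mdiff[simp]: "((A::'a::field^'n^'m) - B) *v x = A *v x - B *v x"
  by (simp add: matrix_vector_mult_diff_rdistrib)
lemma mv_mult[simp]: "((A::'a::field^'n^'m) ** B) *v x = A *v (B *v x)"
  by (simp add: matrix_vector_mul_assoc)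
lemma mv_one[simp]: "mat 1 *v (x::'a::field^'n) = x"
  by simp

lemma mat_eqI: "(\<And>x. (A::'a::field^'n^'m) *v x = B *v x) \<Longrightarrow> A = B"
  by (simp add: matrix_eq)

lemma dotv_axis[simp]: "dotv (axis i c) v = c * v$i"
proof -
  have "dotv (axis i c) v = (\<Sum>j\<in>UNIV. if j = i then c * v$i else 0)"
    unfolding dotv_def by (rule sum.cong) (auto simp: axis_def)
  then show ?thesis by simp
qed

lemma dotv_exists: assumes "(v::'a::field^'n) \<noteq> 0" shows "\<exists>p. dotv p v = 1"
proof -
  obtain i where i: "v$i \<noteq> 0" using assms by (metis vec_eq_iff zero_index)
  have "dotv (axis i (inverse (v$i))) v = 1"
    using i by simp
  then show ?thesis by blast
qed


lemma mpow_add: "mpow X (a + b) = mpow X a ** mpow X b"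
  by (induction a) (simp_all add: matrix_mul_assoc)

lemma mpow_1[simp]: "mpow X 1 = X"
  by simp

lemma mpow_Suc': "mpow X (Suc m) = mpow X m ** X"
  using mpow_add[of X m 1] by simp

lemma mpow_mult: "mpow X (a * b) = mpow (mpow X a) b"
  by (induction b) (simp_all add: mpow_add)

lemma idem_pow:
  fixes X :: "'a::{finite,field}^'n^'n"
  shows "\<exists>k>0. mpow X k ** mpow X k = mpow X k"
proof -
  have "\<not> inj (\<lambda>i::nat. mpow X i)"
  proof
    assume "inj (\<lambda>i::nat. mpow X i)"
    then have "infinite (range (\<lambda>i::nat. mpow X i))"
      using finite_imageD infinite_UNIV_nat by blast
    then show False by simp
  qed
  then obtain i j where ij: "i \<noteq> j" "mpow X i = mpow X j"
    unfolding inj_def by blast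
  then obtain i j where ij: "i < j" "mpow X i = mpow X j"
    by (metis linorder_neqE_nat)
  define p where "p = j - i"
  have p: "p > 0" using ij by (simp add: p_def)
  have step: "mpow X (i + t + p) = mpow X (i + t)" for t
  proof -
    have e: "i + t + p = t + j" using ij by (simp add: p_def)
    have "mpow X (i + t + p) = mpow X t ** mpow X j"
      unfolding e by (rule mpow_add)
    also have "\<dots> = mpow X (t + i)"
      using ij by (simp add: mpow_add)
    finally show ?thesis by (simp add: add.commute)
  qed
  have many: "mpow X (i + t + c * p) = mpow X (i + t)" for t c
  proof (induction c)
    case (Suc c)
    have "mpow X (i + t + Suc c * p) = mpow X (i + (t + c * p) + p)"
      by (simp add: algebra_simps)
    also have "\<dots> = mpow X (i + t + c * p)" using step[of "t + c * p"] by (simp add: algebra_simps)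
    finally show ?case using Suc by simp
  qed simp
  define k where "k = Suc i * p"
  have "k > 0" using p by (simp add: k_def)
  have ip: "i \<le> i * p" using p by simp
  have ki: "k \<ge> i" unfolding k_def mult_Suc using ip by linarith
  have "mpow X k ** mpow X k = mpow X (i + (k - i) + Suc i * p)"
    using ki by (simp add: mpow_add[symmetric] k_def)
  also have "\<dots> = mpow X k" using many[of "k - i" "Suc i"] ki by simp
  finally show ?thesis using \<open>k > 0\<close> by blast
qed

lemma inv_mult_D:
  fixes A B :: "'a::field^'n^'n"
  assumes "invertible (A ** B)"
  shows "invertible A" "invertible B"
proof -
  obtain C where C: "(A ** B) ** C = mat 1" "C ** (A ** B) = mat 1"
    using assms unfolding invertible_def by blast
  show "invertible A" using C(1) invertible_right_inverse by (metis matrix_mul_assoc)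
  show "invertible B" using C(2) invertible_left_inverse by (metis matrix_mul_assoc)
qed

lemma invertible_mat1: "invertible (mat 1 :: 'a::field^'n^'n)"
  unfolding invertible_def by (rule exI[of _ "mat 1"]) simp

lemma inv_mpow: "invertible (X::'a::field^'n^'n) \<Longrightarrow> invertible (mpow X m)"
  by (induction m) (simp_all add: invertible_mat1 invertible_mult)

lemma mpow_inv_D: "invertible (mpow (X::'a::field^'n^'n) m) \<Longrightarrow> m > 0 \<Longrightarrow> invertible X"
  by (cases m) (auto dest: inv_mult_D)

lemma idem_inv:
  fixes P :: "'a::field^'n^'n"
  assumes "invertible P" "P ** P = P"
  shows "P = mat 1"
proof -
  obtain Q where Q: "Q ** P = mat 1" using assms invertible_left_inverse by blast
  have "P = (Q ** P) ** P" using Q by simp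
  also have "\<dots> = Q ** (P ** P)" by (simp add: matrix_mul_assoc)
  also have "\<dots> = mat 1" using Q assms(2) by simp
  finally show ?thesis .
qed

lemma zero_not_invertible: "\<not> invertible (0 :: 'a::field^'n^'n)"
proof
  assume "invertible (0 :: 'a::field^'n^'n)"
  then obtain B where "(0 :: 'a::field^'n^'n) ** B = mat 1" unfolding invertible_def by blast
  then have "(0 :: 'a::field^'n^'n) = mat 1" by simp
  then have "(0 :: 'a::field^'n^'n)$i$i = (mat 1 :: 'a::field^'n^'n)$i$i" for i by simp
  then show False by (simp add: mat_def)
qed

lemma rank_le_iff:
  fixes A :: "'a::field^'n^'n"
  shows "rank A \<le> CARD('n) - 1 \<longleftrightarrow> \<not> invertible A"
proof -
  have le: "rank A \<le> CARD('n)" unfolding row_rank_def_gen by (rule dim_subset_UNIV_cart_gen)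
  have "invertible A \<longleftrightarrow> vec.span (rows A) = UNIV"
    by (simp add: invertible_left_inverse matrix_left_invertible_span_rows_gen)
  also have "\<dots> \<longleftrightarrow> rank A = CARD('n)"
    unfolding row_rank_def_gen
  proof
    assume "vec.span (rows A) = UNIV"
    then show "vec.dim (rows A) = CARD('n)"
      by (metis vec.dim_span vec_dim_card)
  next
    assume "vec.dim (rows A) = CARD('n)"
    then have "vec.span (rows A) = vec.span UNIV"
      by (intro vec.dim_eq_span) (auto simp: card_cart_basis)
    then show "vec.span (rows A) = UNIV" by simp
  qed
  finally show ?thesis using le zero_less_card_finite[where 'a='n] by linarith
qed


lemma subspace_ker: "vec.subspace (mat_kernel (A::'a::field^'n^'n))"
  unfolding mat_kernel_def by (rule vec.subspace_kernel)

lemma subspace_im: "vec.subspace (mat_image (A::'a::field^'n^'n))"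
  unfolding mat_image_def by (rule vec.subspace_image) (rule vec.subspace_UNIV)

lemma dim_le_n: "vec.dim (S::('a::field^'n) set) \<le> CARD('n)"
  by (rule dim_subset_UNIV_cart_gen)

lemma sub_eq:
  fixes S T :: "('a::field^'n) set"
  assumes "vec.subspace S" "vec.subspace T" "S \<subseteq> T" "vec.dim T \<le> vec.dim S"
  shows "S = T"
  using vec.subspace_dim_equal assms by blast

lemma rank_nullity:
  fixes A :: "'a::field^'n^'n"
  shows "vec.dim (mat_kernel A) + vec.dim (mat_image A) = CARD('n)"
proof -
  let ?K = "mat_kernel A"
  let ?f = "(*v) A"
  obtain B where B: "B \<subseteq> ?K" "vec.independent B" "?K \<subseteq> vec.span B" "card B = vec.dim ?K"
    using vec.basis_exists[of ?K] by (rule vec.basis_exists)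
  obtain C where C: "B \<subseteq> C" "vec.independent C" "UNIV \<subseteq> vec.span C"
    by (rule vec.maximal_independent_subset_extend[of B UNIV]) (use B(2) in auto)
  have finC: "finite C" using C(2) vec.independent_bound_general by blast
  have cardC: "card C = CARD('n)"
  proof -
    have "vec.dim (vec.span C) = card C" using C(2) vec.dim_span_eq_card_independent by blast
    moreover have "vec.span C = UNIV" using C(3) by blast
    ultimately show ?thesis using vec_dim_card[where 'n='n and 'a='a] by simp
  qed
  define D where "D = C - B"
  have indD: "vec.independent D" unfolding D_def by (rule vec.independent_mono[OF C(2)]) blast
  have cardD: "card D = CARD('n) - vec.dim ?K"
    unfolding D_def using finC C(1) cardC B(4) by (subst card_Diff_subset) (auto intro: finite_subset)
  have spanBD: "z = 0" if z: "z \<in> vec.span B" "z \<in> vec.span D" for z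
  proof -
    obtain g where g: "Vector_Spaces.linear (*s) (*s) g"
        "\<forall>x\<in>C. g x = (if x \<in> B then 0 else x)"
      using vec.linear_independent_extend[OF C(2), of "\<lambda>x. if x \<in> B then 0 else x"] by blast
    have "g z = 0"
      by (rule vec.linear_eq_0_on_span[OF g(1) _ z(1)]) (use g(2) C(1) in auto)
    moreover have "g z = id z"
      by (rule vec.linear_eq_on_span[OF g(1) vec.linear_id _ z(2)]) (use g(2) in \<open>auto simp: D_def\<close>)
    ultimately show ?thesis by simp
  qed
  have inj: "inj_on ?f (vec.span D)"
  proof (rule inj_onI)
    fix x y assume xy: "x \<in> vec.span D" "y \<in> vec.span D" "A *v x = A *v y"
    have "x - y \<in> vec.span D" using xy vec.span_diff by blast
    moreover have "x - y \<in> vec.span B"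
      using xy(3) B(3) by (auto simp: mat_kernel_def)
    ultimately show "x = y" using spanBD[of "x - y"] by simp
  qed
  have "vec.dim (?f ` D) = vec.dim D"
    by (rule vec.dim_image_eq[OF vec.linear_axioms inj])
  also have "\<dots> = card D" using indD vec.dim_eq_card_independent by blast
  finally have dimfD: "vec.dim (?f ` D) = card D" .
  have "mat_image A = vec.span (?f ` D)"
  proof
    show "vec.span (?f ` D) \<subseteq> mat_image A"
    proof -
      have "vec.span (?f ` D) = ?f ` vec.span D" by (rule vec.span_image)
      then show ?thesis by (auto simp: mat_image_def)
    qed
  next
    have "mat_image A = ?f ` vec.span C" using C(3) by (auto simp: mat_image_def)
    also have "\<dots> = vec.span (?f ` C)" by (simp add: vec.span_image)
    also have "\<dots> \<subseteq> vec.span (?f ` D)"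
    proof (rule vec.span_minimal)
      show "?f ` C \<subseteq> vec.span (?f ` D)"
      proof
        fix y assume "y \<in> ?f ` C"
        then obtain x where x: "x \<in> C" "y = A *v x" by blast
        show "y \<in> vec.span (?f ` D)"
        proof (cases "x \<in> B")
          case True
          then have "y = 0" using x B(1) by (auto simp: mat_kernel_def)
          then show ?thesis using vec.span_zero by simp
        next
          case False
          then show ?thesis using x by (auto simp: D_def intro: vec.span_base)
        qed
      qed
    qed simp
    finally show "mat_image A \<subseteq> vec.span (?f ` D)" .
  qed
  then have "vec.dim (mat_image A) = card D" using dimfD by simp
  then show ?thesis using cardD dim_le_n[of ?K] by linarith
qed

lemma invertible_iff_im:
  fixes A :: "'a::field^'n^'n"
  shows "invertible A \<longleftrightarrow> mat_image A = UNIV"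
  unfolding invertible_right_inverse matrix_right_invertible_surjective mat_image_def by simp

lemma invertible_iff_ker:
  fixes A :: "'a::field^'n^'n"
  shows "invertible A \<longleftrightarrow> mat_kernel A = {0}"
  unfolding invertible_left_inverse matrix_left_invertible_ker mat_kernel_def by auto

lemma invertible_iff_dim_im:
  fixes A :: "'a::field^'n^'n"
  shows "invertible A \<longleftrightarrow> vec.dim (mat_image A) = CARD('n)"
proof
  assume "invertible A" then show "vec.dim (mat_image A) = CARD('n)"
    using invertible_iff_im vec_dim_card by metis
next
  assume "vec.dim (mat_image A) = CARD('n)"
  then have "mat_image A = UNIV"
    using sub_eq[OF subspace_im vec.subspace_UNIV, of A] by (simp add: card_cart_basis)
  then show "invertible A" using invertible_iff_im by blast
qed

lemma dim_span_single: "(v::'a::field^'n) \<noteq> 0 \<Longrightarrow> vec.dim (vec.span {v}) = 1"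
  using vec.dim_span_eq_card_independent[of "{v}"] vec.independent_insert[of v "{}"]
  by (simp add: vec.span_empty)

lemma dim1_span:
  fixes S :: "('a::field^'n) set"
  assumes "vec.subspace S" "vec.dim S = 1" "v \<in> S" "v \<noteq> 0"
  shows "S = vec.span {v}"
proof -
  have "vec.span {v} \<subseteq> S" using assms(1,3) vec.span_minimal by blast
  then have "vec.span {v} = S"
    by (rule sub_eq[OF vec.subspace_span assms(1)]) (simp add: assms dim_span_single)
  then show ?thesis by simp
qed

lemma dim_pos_nonzero:
  fixes S :: "('a::field^'n) set"
  assumes "vec.dim S \<ge> 1"
  shows "\<exists>v\<in>S. v \<noteq> 0"
proof (rule ccontr)
  assume "\<not> (\<exists>v\<in>S. v \<noteq> 0)"
  then have "S \<subseteq> {0}" by auto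
  then have "vec.dim S = 0" by simp
  with assms show False by simp
qed


lemma sv_diff_l[simp]: "((a::'a::field) - b) *s (u::'a^'n) = a *s u - b *s u"
  by (simp add: vec_eq_iff algebra_simps)
lemma sv_add_l[simp]: "((a::'a::field) + b) *s (u::'a^'n) = a *s u + b *s u"
  by (simp add: vec_eq_iff algebra_simps)
lemma sv_zero_l[simp]: "(0::'a::field) *s (u::'a^'n) = 0"
  by (simp add: vec_eq_iff)
lemma sv_one_l[simp]: "(1::'a::field) *s (u::'a^'n) = u"
  by (simp add: vec_eq_iff)
lemma sv_zero_r[simp]: "(a::'a::field) *s (0::'a^'n) = 0"
  by (simp add: vec_eq_iff)
lemma sv_assoc[simp]: "(a::'a::field) *s (b *s (u::'a^'n)) = (a * b) *s u"
  by (simp add: vec_eq_iff algebra_simps)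

context
  fixes E :: "'a::field^'n^'n" and u0 p :: "'a^'n"
  assumes idem: "E ** E = E" and Eu0: "E *v u0 = u0" and pu0: "dotv p u0 = 1"
begin

definition "chi = compf p E"
definition "E0 = E - outer u0 chi"

lemma EE[simp]: "E *v (E *v x) = E *v x"
  using idem by (metis mv_mult)
lemma Eu0'[simp]: "E *v u0 = u0" by (rule Eu0)
lemma chiE[simp]: "dotv chi (E *v y) = dotv chi y"
  by (simp add: chi_def)
lemma chiu0[simp]: "dotv chi u0 = 1"
  by (simp add: chi_def pu0)
lemma E0_app: "E0 *v y = E *v y - dotv chi y *s u0"
  by (simp add: E0_def)
lemma E0_idem: "E0 ** E0 = E0"
  by (rule mat_eqI) (simp add: E0_app)

lemma E0_sub: "E0 *v y = E *v (y - dotv chi y *s u0)"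
  by (simp add: E0_app)
lemma chiE0[simp]: "dotv chi (E0 *v y) = 0"
  by (simp add: E0_app)
lemma E0u0[simp]: "E0 *v u0 = 0"
  by (simp add: E0_app)
lemma E0_smaller: "vec.dim (mat_image E0) < vec.dim (mat_image E)"
proof -
  have sub: "mat_image E0 \<subseteq> mat_image E"
    unfolding mat_image_def
  proof (rule image_subsetI)
    fix y show "E0 *v y \<in> range ((*v) E)" using E0_sub[of y] by (metis rangeI)
  qed
  have "u0 \<in> mat_image E" unfolding mat_image_def using Eu0 by (metis rangeI)
  moreover have "u0 \<notin> mat_image E0"
  proof
    assume "u0 \<in> mat_image E0"
    then obtain y where "u0 = E0 *v y" unfolding mat_image_def by blast
    then have "dotv chi u0 = 0" by (metis chiE0)
    then show False by simp
  qed
  ultimately have "mat_image E0 \<subset> mat_image E" using sub by blast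
  then have "vec.span (mat_image E0) \<subset> vec.span (mat_image E)"
    using subspace_im vec.span_eq_iff by metis
  then show ?thesis by (rule vec.dim_psubset)
qed

context
  fixes w q :: "'a^'n"
  assumes Ew: "E *v w = 0" and qw: "dotv q w = 1"
begin

lemma Ew'[simp]: "E *v w = 0" by (rule Ew)
lemma chiw[simp]: "dotv chi w = 0" by (simp add: chi_def)
lemma E0w[simp]: "E0 *v w = 0" by (simp add: E0_app)

definition "psi = compf q (mat 1 - E)"
lemma psi_app: "dotv psi y = dotv q y - dotv q (E *v y)"
  by (simp add: psi_def)
lemma psiE[simp]: "dotv psi (E *v y) = 0" by (simp add: psi_app)
lemma psiw[simp]: "dotv psi w = 1" by (simp add: psi_app qw)
lemma psiu0[simp]: "dotv psi u0 = 0" by (simp add: psi_app)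
lemma psiE0[simp]: "dotv psi (E0 *v y) = 0" by (simp add: E0_app psi_app)

lemma up_Y1: "(E0 + outer w chi) ** (E0 + outer w chi) = E0"
  by (rule mat_eqI) (simp add: E0_app)
lemma up_Y2: "(E0 + outer u0 psi) ** (E0 + outer u0 psi) = E0"
  by (rule mat_eqI) (simp add: E0_app)
lemma up_Y21: "(E0 + outer u0 psi) ** (E0 + outer w chi) = E"
  by (rule mat_eqI) (simp add: E0_app)

definition "Pswap = mat 1 - outer u0 chi - outer w psi + outer w chi + outer u0 psi"
lemma Pswap_sq: "Pswap ** Pswap = mat 1"
  by (rule mat_eqI) (simp add: Pswap_def algebra_simps)
lemma Z_sq: "(E ** Pswap) ** (E ** Pswap) = E0"
  by (rule mat_eqI) (simp add: Pswap_def E0_app algebra_simps)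

end

context
  fixes w1 w2 q1 q2 :: "'a^'n"
  assumes Ew1: "E *v w1 = 0" and Ew2: "E *v w2 = 0"
    and q11: "dotv q1 w1 = 1" and q12: "dotv q1 w2 = 0"
    and q21: "dotv q2 w1 = 0" and q22: "dotv q2 w2 = 1"
begin

lemma Ew1'[simp]: "E *v w1 = 0" by (rule Ew1)
lemma Ew2'[simp]: "E *v w2 = 0" by (rule Ew2)
lemma q_simps[simp]: "dotv q1 w1 = 1" "dotv q1 w2 = 0" "dotv q2 w1 = 0" "dotv q2 w2 = 1"
  using q11 q12 q21 q22 by auto
lemma chiw12[simp]: "dotv chi w1 = 0" "dotv chi w2 = 0" by (simp_all add: chi_def)
lemma E0w12[simp]: "E0 *v w1 = 0" "E0 *v w2 = 0" by (simp_all add: E0_app)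

definition "psi1 = compf q1 (mat 1 - E)"
definition "psi2 = compf q2 (mat 1 - E)"
lemma psi12_app: "dotv psi1 y = dotv q1 y - dotv q1 (E *v y)"
   "dotv psi2 y = dotv q2 y - dotv q2 (E *v y)"
  by (simp_all add: psi1_def psi2_def)
lemma psi12_simps[simp]: "dotv psi1 (E *v y) = 0" "dotv psi2 (E *v y) = 0"
  "dotv psi1 w1 = 1" "dotv psi1 w2 = 0" "dotv psi2 w1 = 0" "dotv psi2 w2 = 1"
  "dotv psi1 u0 = 0" "dotv psi2 u0 = 0"
  "dotv psi1 (E0 *v y) = 0" "dotv psi2 (E0 *v y) = 0"
  by (simp_all add: psi12_app E0_app)

lemma dn_Y1: "(E + outer w1 psi2) ** (E + outer w1 psi2) = E"
  by (rule mat_eqI) simp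
lemma dn_Y2: "(E + outer w2 psi1) ** (E + outer w2 psi1) = E"
  by (rule mat_eqI) simp
lemma dn_A: "(E0 + outer w1 chi + outer u0 psi1) ** (E0 + outer w1 chi + outer u0 psi1)
    = (E + outer w1 psi2) ** (E + outer w2 psi1)"
  by (rule mat_eqI) (simp add: E0_app algebra_simps)
lemma dn_Z: "(((E + outer w2 psi1) ** (E + outer w1 psi2)) ** (E0 + outer w1 chi + outer u0 psi1)) **
     (((E + outer w2 psi1) ** (E + outer w1 psi2)) ** (E0 + outer w1 chi + outer u0 psi1)) = E0"
  by (rule mat_eqI) (simp add: E0_app algebra_simps)

end

end


lemma mul_in: "isolated_subsemigroup T \<Longrightarrow> A \<in> T \<Longrightarrow> B \<in> T \<Longrightarrow> A ** B \<in> T"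
  unfolding isolated_subsemigroup_def subsemigroup_mat_def by blast

lemma pow_in: "isolated_subsemigroup T \<Longrightarrow> X \<in> T \<Longrightarrow> 0 < m \<Longrightarrow> mpow X m \<in> T"
proof (induction m)
  case (Suc m)
  then show ?case
    by (cases m) (auto intro: mul_in)
qed simp

lemma pow_iff: "isolated_subsemigroup T \<Longrightarrow> 0 < m \<Longrightarrow> mpow X m \<in> T \<longleftrightarrow> X \<in> T"
  using pow_in unfolding isolated_subsemigroup_def by blast

lemma sq_in: "isolated_subsemigroup T \<Longrightarrow> Y ** Y = X \<Longrightarrow> X \<in> T \<Longrightarrow> Y \<in> T"
  using pow_iff[of T 2 Y] by (simp add: numeral_2_eq_2)

lemma exists_E0:
  fixes E :: "'a::field^'n^'n"
  assumes idem: "E ** E = E" and nz: "E \<noteq> 0"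
  obtains E0 where "E0 ** E0 = E0" "vec.dim (mat_image E0) < vec.dim (mat_image E)"
    "\<forall>T w. isolated_subsemigroup T \<longrightarrow> E0 \<in> T \<longrightarrow> E *v w = 0 \<longrightarrow> w \<noteq> 0 \<longrightarrow> E \<in> T"
    "\<forall>T w. isolated_subsemigroup T \<longrightarrow> E \<in> T \<longrightarrow> mat 1 \<in> T \<longrightarrow> E *v w = 0 \<longrightarrow> w \<noteq> 0 \<longrightarrow> E0 \<in> T"
    "\<forall>T w1 w2 q1 q2. isolated_subsemigroup T \<longrightarrow> E \<in> T \<longrightarrow> E *v w1 = 0 \<longrightarrow> E *v w2 = 0 \<longrightarrow>
        dotv q1 w1 = 1 \<longrightarrow> dotv q1 w2 = 0 \<longrightarrow> dotv q2 w1 = 0 \<longrightarrow> dotv q2 w2 = 1 \<longrightarrow> E0 \<in> T"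
proof -
  obtain x where x: "E *v x \<noteq> 0" using nz by (metis matrix_eq matrix_vector_mult_0)
  define u0 where "u0 = E *v x"
  have Eu0: "E *v u0 = u0" unfolding u0_def using idem by (metis mv_mult)
  obtain p where p: "dotv p u0 = 1" using dotv_exists x u0_def by blast
  note ctx = idem Eu0 p
  show ?thesis
  proof (rule that[of "E0 E u0 p"]; (intro allI impI)?)
    show "E0 E u0 p ** E0 E u0 p = E0 E u0 p" by (rule E0_idem[OF ctx])
    show "vec.dim (mat_image (E0 E u0 p)) < vec.dim (mat_image E)" by (rule E0_smaller[OF ctx])
  next
    fix T w assume iso: "isolated_subsemigroup T" and E0T: "E0 E u0 p \<in> T"
      and Ew: "E *v w = 0" and w: "w \<noteq> 0"
    obtain q where q: "dotv q w = 1" using dotv_exists w by blast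
    note Y1 = sq_in[OF iso up_Y1[OF ctx Ew q] E0T]
    note Y2 = sq_in[OF iso up_Y2[OF ctx Ew q] E0T]
    show "E \<in> T" using mul_in[OF iso Y2 Y1] up_Y21[OF ctx Ew q] by simp
  next
    fix T w assume iso: "isolated_subsemigroup T" and ET: "E \<in> T" and IT: "mat 1 \<in> T"
      and Ew: "E *v w = 0" and w: "w \<noteq> 0"
    obtain q where q: "dotv q w = 1" using dotv_exists w by blast
    note P = sq_in[OF iso Pswap_sq[OF ctx Ew q] IT]
    note Z = mul_in[OF iso ET P]
    show "E0 E u0 p \<in> T" using mul_in[OF iso Z Z] Z_sq[OF ctx Ew q] by simp
  next
    fix T w1 w2 q1 q2 assume iso: "isolated_subsemigroup T" and ET: "E \<in> T"
      and h: "E *v w1 = 0" "E *v w2 = 0" "dotv q1 w1 = 1" "dotv q1 w2 = 0" "dotv q2 w1 = 0" "dotv q2 w2 = 1"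
    note Y1 = sq_in[OF iso dn_Y1[OF ctx h] ET]
    note Y2 = sq_in[OF iso dn_Y2[OF ctx h] ET]
    note A = sq_in[OF iso dn_A[OF ctx h] mul_in[OF iso Y1 Y2]]
    note Z = mul_in[OF iso mul_in[OF iso Y2 Y1] A]
    show "E0 E u0 p \<in> T" using mul_in[OF iso Z Z] dn_Z[OF ctx h] by simp
  qed
qed


lemma dotv_row: "dotv (M$k) x = (M *v x)$k"
  by (simp add: dotv_def matrix_vector_mult_def)

lemma functional_exists:
  fixes B :: "('a::field^'n) set"
  assumes "vec.independent B" "b \<in> B"
  shows "\<exists>q. dotv q b = 1 \<and> (\<forall>c\<in>B. c \<noteq> b \<longrightarrow> dotv q c = 0)"
proof -
  obtain g where g: "Vector_Spaces.linear (*s) (*s) g"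
      "\<forall>x\<in>B. g x = (if x = b then axis undefined 1 else 0)"
    using vec.linear_independent_extend[OF assms(1), of "\<lambda>x. if x = b then axis undefined 1 else 0"]
    by blast
  let ?q = "(matrix g)$undefined"
  have "dotv ?q x = (g x)$undefined" for x
    by (simp add: dotv_row matrix_works[OF g(1)])
  then show ?thesis using g(2) assms(2) by (intro exI[of _ ?q]) (simp add: axis_def)
qed

lemma two_kernel:
  fixes E :: "'a::field^'n^'n"
  assumes "vec.dim (mat_kernel E) \<ge> 2"
  shows "\<exists>w1 w2 q1 q2. E *v w1 = 0 \<and> E *v w2 = 0 \<and> dotv q1 w1 = 1 \<and> dotv q1 w2 = 0 \<and>
     dotv q2 w1 = 0 \<and> dotv q2 w2 = 1"
proof -
  obtain B where B: "B \<subseteq> mat_kernel E" "vec.independent B" "mat_kernel E \<subseteq> vec.span B"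
      "card B = vec.dim (mat_kernel E)"
    by (rule vec.basis_exists)
  have fin: "finite B" using B(2) vec.independent_bound_general by blast
  have "\<not> card B \<le> Suc 0" using B(4) assms by simp
  then obtain w1 w2 where w: "w1 \<in> B" "w2 \<in> B" "w1 \<noteq> w2"
    using card_le_Suc0_iff_eq[OF fin] by blast
  obtain q1 where q1: "dotv q1 w1 = 1" "\<forall>c\<in>B. c \<noteq> w1 \<longrightarrow> dotv q1 c = 0"
    using functional_exists[OF B(2) w(1)] by blast
  obtain q2 where q2: "dotv q2 w2 = 1" "\<forall>c\<in>B. c \<noteq> w2 \<longrightarrow> dotv q2 c = 0"
    using functional_exists[OF B(2) w(2)] by blast
  have e: "E *v w1 = 0" "E *v w2 = 0" using w B(1) by (auto simp: mat_kernel_def)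
  have z: "dotv q1 w2 = 0" "dotv q2 w1 = 0" using q1(2) q2(2) w by auto
  show ?thesis using e z q1(1) q2(1) by blast
qed

lemma kernel_nonzero:
  fixes E :: "'a::field^'n^'n"
  assumes "\<not> invertible E"
  shows "\<exists>w. w \<noteq> 0 \<and> E *v w = 0"
  using assms invertible_iff_ker[of E] subspace_ker[of E] vec.subspace_0
  unfolding mat_kernel_def by auto

lemma zero_in:
  fixes E :: "'a::field^'n^'n"
  assumes iso: "isolated_subsemigroup T"
  shows "E \<in> T \<Longrightarrow> E ** E = E \<Longrightarrow> \<not> invertible E \<Longrightarrow>
    (mat 1 \<in> T \<or> vec.dim (mat_image E) + 2 \<le> CARD('n)) \<Longrightarrow> 0 \<in> T"
proof (induction "vec.dim (mat_image E)" arbitrary: E rule: less_induct)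
  case less
  show ?case
  proof (cases "E = 0")
    case True then show ?thesis using less by simp
  next
    case False
    obtain E0 where E0: "E0 ** E0 = E0" "vec.dim (mat_image E0) < vec.dim (mat_image E)"
      "\<forall>T w. isolated_subsemigroup T \<longrightarrow> E \<in> T \<longrightarrow> mat 1 \<in> T \<longrightarrow> E *v w = 0 \<longrightarrow> w \<noteq> 0 \<longrightarrow> E0 \<in> T"
      "\<forall>T w1 w2 q1 q2. isolated_subsemigroup T \<longrightarrow> E \<in> T \<longrightarrow> E *v w1 = 0 \<longrightarrow> E *v w2 = 0 \<longrightarrow>
        dotv q1 w1 = 1 \<longrightarrow> dotv q1 w2 = 0 \<longrightarrow> dotv q2 w1 = 0 \<longrightarrow> dotv q2 w2 = 1 \<longrightarrow> E0 \<in> T"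
      by (rule exists_E0[OF less(3) False]) blast+
    have E0T: "E0 \<in> T"
    proof (cases "mat 1 \<in> T")
      case True
      obtain w where w: "w \<noteq> 0" "E *v w = 0" using kernel_nonzero less(4) by blast
      show ?thesis by (rule E0(3)[rule_format, OF iso less(2) True w(2) w(1)])
    next
      case False
      then have "vec.dim (mat_image E) + 2 \<le> CARD('n)" using less(5) by blast
      then have "vec.dim (mat_kernel E) \<ge> 2" using rank_nullity[of E] by linarith
      then obtain w1 w2 q1 q2 where h: "E *v w1 = 0" "E *v w2 = 0" "dotv q1 w1 = 1" "dotv q1 w2 = 0"
          "dotv q2 w1 = 0" "dotv q2 w2 = 1"
        using two_kernel by blast
      show ?thesis by (rule E0(4)[rule_format, OF iso less(2) h])
    qed
    have "\<not> invertible E0"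
      using E0(2) invertible_iff_dim_im[of E0] dim_le_n[of "mat_image E"] by linarith
    then show ?thesis using less(1)[OF E0(2) E0T E0(1)] less(5) E0(2) by linarith
  qed
qed

lemma sing_idem_in:
  fixes E :: "'a::field^'n^'n"
  assumes iso: "isolated_subsemigroup T" and zero: "0 \<in> T"
  shows "E ** E = E \<Longrightarrow> \<not> invertible E \<Longrightarrow> E \<in> T"
proof (induction "vec.dim (mat_image E)" arbitrary: E rule: less_induct)
  case less
  show ?case
  proof (cases "E = 0")
    case True then show ?thesis using zero by simp
  next
    case False
    obtain E0 where E0: "E0 ** E0 = E0" "vec.dim (mat_image E0) < vec.dim (mat_image E)"
      "\<forall>T w. isolated_subsemigroup T \<longrightarrow> E0 \<in> T \<longrightarrow> E *v w = 0 \<longrightarrow> w \<noteq> 0 \<longrightarrow> E \<in> T"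
      by (rule exists_E0[OF less(2) False]) blast+
    have "\<not> invertible E0"
      using E0(2) invertible_iff_dim_im[of E0] dim_le_n[of "mat_image E"] by linarith
    then have "E0 \<in> T" using less(1)[OF E0(2) E0(1)] by blast
    moreover obtain w where "w \<noteq> 0" "E *v w = 0" using kernel_nonzero less(3) by blast
    ultimately show ?thesis using E0(3) iso by blast
  qed
qed

lemma sing_in:
  fixes X :: "'a::{finite,field}^'n^'n"
  assumes iso: "isolated_subsemigroup T" and zero: "0 \<in> T" and X: "\<not> invertible X"
  shows "X \<in> T"
proof -
  obtain k where k: "k > 0" "mpow X k ** mpow X k = mpow X k" using idem_pow by blast
  have "\<not> invertible (mpow X k)" using X mpow_inv_D k(1) by blast
  then have "mpow X k \<in> T" using sing_idem_in[OF iso zero k(2)] by blast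
  then show ?thesis using pow_iff[OF iso k(1)] by blast
qed

lemma im_mpow_sub: "0 < k \<Longrightarrow> mat_image (mpow (X::'a::field^'n^'n) k) \<subseteq> mat_image X"
  by (cases k) (auto simp: mat_image_def)

lemma ker_mpow_sub: "0 < k \<Longrightarrow> mat_kernel (X::'a::field^'n^'n) \<subseteq> mat_kernel (mpow X k)"
  by (cases k) (auto simp: mat_kernel_def mpow_Suc' simp del: mpow.simps)


lemma ker_im_disj:
  fixes A B :: "'a::field^'n^'n"
  assumes "vec.dim (mat_kernel A) = 1" "\<not> mat_kernel A \<subseteq> mat_image B"
    "v \<in> mat_kernel A" "v \<in> mat_image B"
  shows "v = 0"
proof (rule ccontr)
  assume v: "v \<noteq> 0"
  have "mat_kernel A = vec.span {v}" using dim1_span[OF subspace_ker assms(1) assms(3) v] .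
  also have "\<dots> \<subseteq> mat_image B" using assms(4) subspace_im vec.span_minimal by blast
  finally show False using assms(2) by blast
qed

lemma prod_ker:
  fixes A B :: "'a::field^'n^'n"
  assumes "vec.dim (mat_kernel A) = 1" "\<not> mat_kernel A \<subseteq> mat_image B"
  shows "mat_kernel (A ** B) = mat_kernel B"
proof
  show "mat_kernel B \<subseteq> mat_kernel (A ** B)" by (auto simp: mat_kernel_def)
next
  show "mat_kernel (A ** B) \<subseteq> mat_kernel B"
  proof
    fix x assume "x \<in> mat_kernel (A ** B)"
    then have "B *v x \<in> mat_kernel A" by (simp add: mat_kernel_def)
    moreover have "B *v x \<in> mat_image B" by (simp add: mat_image_def)
    ultimately have "B *v x = 0" using ker_im_disj[OF assms] by blast
    then show "x \<in> mat_kernel B" by (simp add: mat_kernel_def)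
  qed
qed

lemma im_prod_sub: "mat_image ((A::'a::field^'n^'n) ** B) \<subseteq> mat_image A"
  by (auto simp: mat_image_def)

lemma idem_eq:
  fixes P Q :: "'a::field^'n^'n"
  assumes "P ** P = P" "Q ** Q = Q" "mat_image P = mat_image Q" "mat_kernel P = mat_kernel Q"
  shows "P = Q"
proof (rule mat_eqI)
  fix x
  have PP: "P *v (P *v y) = P *v y" for y using assms(1) by (metis mv_mult)
  have QQ: "Q *v (Q *v y) = Q *v y" for y using assms(2) by (metis mv_mult)
  have "P *v x \<in> mat_image Q" using assms(3) by (auto simp: mat_image_def)
  then obtain z where z: "P *v x = Q *v z" by (auto simp: mat_image_def)
  have QP: "Q *v (P *v x) = P *v x" using z QQ by simp
  have "x - P *v x \<in> mat_kernel P" using PP by (simp add: mat_kernel_def)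
  then have "x - P *v x \<in> mat_kernel Q" using assms(4) by simp
  then have "Q *v (x - P *v x) = 0" by (simp only: mat_kernel_def mem_Collect_eq)
  then show "P *v x = Q *v x" using QP by (simp only: mv_diff) simp
qed

lemma ker_pow_eq:
  fixes X :: "'a::field^'n^'n"
  assumes disj: "\<And>v. v \<in> mat_kernel X \<Longrightarrow> v \<in> mat_image X \<Longrightarrow> v = 0"
  shows "mat_kernel (mpow X (Suc j)) = mat_kernel X"
proof (induction j)
  case 0 then show ?case by simp
next
  case (Suc j)
  show ?case
  proof (intro set_eqI iffI)
    fix y assume "y \<in> mat_kernel (mpow X (Suc (Suc j)))"
    then have "X *v y \<in> mat_kernel (mpow X (Suc j))"
      by (simp add: mat_kernel_def mpow_Suc'[of X "Suc j"] del: mpow.simps)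
    then have "X *v y \<in> mat_kernel X" using Suc by simp
    moreover have "X *v y \<in> mat_image X" by (simp add: mat_image_def)
    ultimately have "X *v y = 0" using disj by blast
    then show "y \<in> mat_kernel X" by (simp add: mat_kernel_def)
  next
    fix y assume "y \<in> mat_kernel X"
    then show "y \<in> mat_kernel (mpow X (Suc (Suc j)))"
      by (simp add: mat_kernel_def mpow_Suc'[of X "Suc j"] del: mpow.simps)
  qed
qed


lemma iso_UNIV: "isolated_subsemigroup (UNIV :: ('a::semiring_1^'n^'n) set)"
  unfolding isolated_subsemigroup_def subsemigroup_mat_def by auto

lemma iso_GL: "isolated_subsemigroup {A :: 'a::field^'n^'n. invertible A}"
  unfolding isolated_subsemigroup_def subsemigroup_mat_def
  using invertible_mat1 invertible_mult mpow_inv_D by blast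

lemma iso_sing: "isolated_subsemigroup {A :: 'a::field^'n^'n. \<not> invertible A}"
  unfolding isolated_subsemigroup_def subsemigroup_mat_def
  using zero_not_invertible inv_mult_D inv_mpow by blast

lemma iso_S:
  fixes \<A> \<B> :: "('a::field^'n) set set"
  assumes ne: "\<A> \<noteq> {}" "\<B> \<noteq> {}"
    and A: "\<forall>V\<in>\<A>. vec.subspace V \<and> vec.dim V = CARD('n) - 1"
    and B: "\<forall>V\<in>\<B>. vec.subspace V \<and> vec.dim V = 1"
    and AB: "\<forall>V1\<in>\<B>. \<forall>V2\<in>\<A>. \<not> V1 \<subseteq> V2"
  shows "isolated_subsemigroup (S_sets \<A> \<B>)"
proof -
  have n1: "CARD('n) \<ge> 1" using zero_less_card_finite[where 'a='n] by linarith
  have ne_S: "S_sets \<A> \<B> \<noteq> {}"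
  proof -
    obtain V2 where V2: "V2 \<in> \<A>" using ne by blast
    obtain V1 where V1: "V1 \<in> \<B>" using ne by blast
    obtain w where w: "w \<in> V1" "w \<notin> V2" using AB V1 V2 by blast
    have sV2: "vec.subspace V2" and dV2: "vec.dim V2 = CARD('n) - 1" using A V2 by auto
    have sV1: "vec.subspace V1" and dV1: "vec.dim V1 = 1" using B V1 by auto
    have w0: "w \<noteq> 0" using w(2) sV2 vec.subspace_0 by blast
    obtain B2 where B2: "B2 \<subseteq> V2" "vec.independent B2" "V2 \<subseteq> vec.span B2" "card B2 = vec.dim V2"
      by (rule vec.basis_exists)
    have spB2: "vec.span B2 = V2" using B2 sV2 vec.span_minimal by blast
    have ind: "vec.independent (insert w B2)"
      by (rule vec.independent_insertI) (use w(2) spB2 B2(2) in auto)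
    obtain q where q: "dotv q w = 1" "\<forall>c\<in>insert w B2. c \<noteq> w \<longrightarrow> dotv q c = 0"
      using functional_exists[OF ind] by blast
    have qV2: "dotv q y = 0" if "y \<in> V2" for y
    proof -
      have "B2 \<subseteq> mat_kernel (outer w q)" using q(2) w B2(1) by (auto simp: mat_kernel_def)
      then have "vec.span B2 \<subseteq> mat_kernel (outer w q)"
        using subspace_ker vec.span_minimal by blast
      then have "dotv q y *s w = 0" using that spB2 by (auto simp: mat_kernel_def)
      then show ?thesis using w0 by (metis vec.scale_eq_0_iff)
    qed
    define P where "P = mat 1 - outer w q"
    have Papp: "P *v y = y - dotv q y *s w" for y by (simp add: P_def)
    have kerP: "mat_kernel P = V1"
    proof
      show "mat_kernel P \<subseteq> V1"
      proof
        fix y assume "y \<in> mat_kernel P"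
        then have "y = dotv q y *s w" using Papp by (simp add: mat_kernel_def)
        then show "y \<in> V1" using sV1 w(1) vec.subspace_scale by metis
      qed
    next
      show "V1 \<subseteq> mat_kernel P"
      proof
        fix y assume "y \<in> V1"
        then have "y \<in> vec.span {w}" using dim1_span[OF sV1 dV1 w(1) w0] by simp
        then obtain c where "y = c *s w" by (auto simp: vec.span_singleton)
        then show "y \<in> mat_kernel P" by (simp add: Papp q(1) mat_kernel_def)
      qed
    qed
    have imP: "mat_image P = V2"
    proof -
      have sub: "V2 \<subseteq> mat_image P"
      proof
        fix y assume "y \<in> V2"
        then have "P *v y = y" using Papp qV2 by simp
        then show "y \<in> mat_image P" unfolding mat_image_def by (metis rangeI)
      qed
      have "vec.dim (mat_image P) = CARD('n) - 1"
        using rank_nullity[of P] kerP dV1 by simp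
      then show ?thesis using sub_eq[OF sV2 subspace_im sub] dV2 by simp
    qed
    have "P \<in> S_sets \<A> \<B>" using kerP imP V1 V2 by (simp add: S_sets_def)
    then show ?thesis by blast
  qed
  have closed: "A ** B' \<in> S_sets \<A> \<B>" if "A \<in> S_sets \<A> \<B>" "B' \<in> S_sets \<A> \<B>" for A B'
  proof -
    have kA: "mat_kernel A \<in> \<B>" and iA: "mat_image A \<in> \<A>" using that(1) by (auto simp: S_sets_def)
    have kB: "mat_kernel B' \<in> \<B>" and iB: "mat_image B' \<in> \<A>" using that(2) by (auto simp: S_sets_def)
    have dkA: "vec.dim (mat_kernel A) = 1" using kA B by auto
    have ni: "\<not> mat_kernel A \<subseteq> mat_image B'" using AB kA iB by blast
    have k: "mat_kernel (A ** B') = mat_kernel B'" by (rule prod_ker[OF dkA ni])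
    have "vec.dim (mat_image (A ** B')) = CARD('n) - 1"
      using rank_nullity[of "A ** B'"] k kB B by auto
    moreover have "vec.dim (mat_image A) = CARD('n) - 1" using iA A by auto
    ultimately have "mat_image (A ** B') = mat_image A"
      using sub_eq[OF subspace_im subspace_im im_prod_sub, of A B'] by simp
    then show ?thesis using k kB iA by (simp add: S_sets_def)
  qed
  have isol: "X \<in> S_sets \<A> \<B>" if m: "0 < m" and Xm: "mpow X m \<in> S_sets \<A> \<B>" for X m
  proof -
    have kM: "mat_kernel (mpow X m) \<in> \<B>" and iM: "mat_image (mpow X m) \<in> \<A>"
      using Xm by (auto simp: S_sets_def)
    have dkM: "vec.dim (mat_kernel (mpow X m)) = 1" using kM B by auto
    have diM: "vec.dim (mat_image (mpow X m)) = CARD('n) - 1" using iM A by auto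
    have subI: "mat_image (mpow X m) \<subseteq> mat_image X" by (rule im_mpow_sub[OF m])
    have subK: "mat_kernel X \<subseteq> mat_kernel (mpow X m)" by (rule ker_mpow_sub[OF m])
    have "\<not> invertible X"
    proof
      assume "invertible X"
      then have "invertible (mpow X m)" by (rule inv_mpow)
      then have "vec.dim (mat_image (mpow X m)) = CARD('n)" using invertible_iff_dim_im by blast
      then show False using diM n1 by linarith
    qed
    then have "vec.dim (mat_image X) \<noteq> CARD('n)" using invertible_iff_dim_im by blast
    moreover have "vec.dim (mat_image X) \<ge> CARD('n) - 1"
      using vec.dim_subset[OF subI] diM by simp
    ultimately have diX: "vec.dim (mat_image X) = CARD('n) - 1"
      using dim_le_n[of "mat_image X"] by linarith
    have iX: "mat_image X = mat_image (mpow X m)"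
      using sub_eq[OF subspace_im subspace_im subI] diX diM by simp
    have "vec.dim (mat_kernel X) = 1" using rank_nullity[of X] diX n1 by linarith
    then have kX: "mat_kernel X = mat_kernel (mpow X m)"
      using sub_eq[OF subspace_ker subspace_ker subK] dkM by simp
    show ?thesis using iX kX kM iM by (simp add: S_sets_def)
  qed
  show ?thesis
    unfolding isolated_subsemigroup_def subsemigroup_mat_def
    using ne_S closed isol by blast
qed


lemma forward_S:
  fixes T :: "('a::{finite,field}^'n^'n) set"
  assumes iso: "isolated_subsemigroup T" and n2: "CARD('n) \<ge> 2"
    and allr: "\<forall>X\<in>T. vec.dim (mat_image X) = CARD('n) - 1"
  shows "\<exists>\<A> \<B>. \<A> \<noteq> {} \<and> \<B> \<noteq> {} \<and>
        (\<forall>V\<in>\<A>. vec.subspace V \<and> vec.dim V = CARD('n) - 1) \<and>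
        (\<forall>V\<in>\<B>. vec.subspace V \<and> vec.dim V = 1) \<and>
        (\<forall>V1\<in>\<B>. \<forall>V2\<in>\<A>. \<not> V1 \<subseteq> V2) \<and>
        T = S_sets \<A> \<B>"
proof -
  have Tne: "T \<noteq> {}" using iso unfolding isolated_subsemigroup_def subsemigroup_mat_def by blast
  have dk: "vec.dim (mat_kernel X) = 1" if "X \<in> T" for X
    using rank_nullity[of X] allr that n2 by auto
  have kerprod: "mat_kernel (X ** Y) = mat_kernel Y" if "X \<in> T" "Y \<in> T" for X Y
  proof -
    have XY: "X ** Y \<in> T" using mul_in[OF iso that] .
    have "mat_kernel Y \<subseteq> mat_kernel (X ** Y)" by (auto simp: mat_kernel_def)
    then have "mat_kernel Y = mat_kernel (X ** Y)"
      by (rule sub_eq[OF subspace_ker subspace_ker]) (simp add: dk[OF XY] dk[OF that(2)])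
    then show ?thesis by simp
  qed
  have noninc: "\<not> mat_kernel X \<subseteq> mat_image Y" if XYT: "X \<in> T" "Y \<in> T" for X Y
  proof
    assume sub: "mat_kernel X \<subseteq> mat_image Y"
    obtain v where v: "v \<in> mat_kernel X" "v \<noteq> 0" using dim_pos_nonzero[of "mat_kernel X"] dk[OF XYT(1)] by auto
    obtain z where z: "v = Y *v z" using sub v(1) by (auto simp: mat_image_def)
    have "z \<in> mat_kernel (X ** Y)" using v(1) z by (simp add: mat_kernel_def)
    then have "z \<in> mat_kernel Y" using kerprod[OF XYT] by simp
    then show False using z v(2) by (simp add: mat_kernel_def)
  qed
  let ?A = "mat_image ` T" and ?B = "mat_kernel ` T"
  have "T = S_sets ?A ?B"
  proof
    show "T \<subseteq> S_sets ?A ?B" by (auto simp: S_sets_def)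
  next
    show "S_sets ?A ?B \<subseteq> T"
    proof
      fix X assume "X \<in> S_sets ?A ?B"
      then obtain A' B' where AB': "A' \<in> T" "B' \<in> T" "mat_image X = mat_image A'" "mat_kernel X = mat_kernel B'"
        by (auto simp: S_sets_def)
      define Y where "Y = A' ** B'"
      have YT: "Y \<in> T" using mul_in[OF iso AB'(1,2)] Y_def by simp
      have kY: "mat_kernel Y = mat_kernel B'" using kerprod[OF AB'(1,2)] Y_def by simp
      have iY: "mat_image Y = mat_image A'"
        using sub_eq[OF subspace_im subspace_im im_prod_sub[of A' B']] allr YT AB'(1) Y_def by simp
      obtain k where k: "k > 0" "mpow Y k ** mpow Y k = mpow Y k" using idem_pow by blast
      have PT: "mpow Y k \<in> T" using pow_in[OF iso YT k(1)] .
      have iP: "mat_image (mpow Y k) = mat_image Y"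
        using sub_eq[OF subspace_im subspace_im im_mpow_sub[OF k(1), where X=Y]] allr YT PT by simp
      have kP: "mat_kernel Y = mat_kernel (mpow Y k)"
        using sub_eq[OF subspace_ker subspace_ker ker_mpow_sub[OF k(1), where X=Y]] dk YT PT by simp
      have disj: "v = 0" if "v \<in> mat_kernel X" "v \<in> mat_image X" for v
        using ker_im_disj[OF dk[OF AB'(2)] noninc[OF AB'(2,1)]] that AB'(3,4) by simp
      obtain j where j: "j > 0" "mpow X j ** mpow X j = mpow X j" using idem_pow by blast
      then obtain j' where j': "j = Suc j'" using gr0_implies_Suc by blast
      have kQ: "mat_kernel (mpow X j) = mat_kernel X" using ker_pow_eq[OF disj] j' by blast
      have "vec.dim (mat_kernel (mpow X j)) = 1" using kQ AB'(4) dk[OF AB'(2)] by simp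
      then have dQ: "vec.dim (mat_image (mpow X j)) = CARD('n) - 1"
        using rank_nullity[of "mpow X j"] by simp
      have iQ: "mat_image (mpow X j) = mat_image X"
        using sub_eq[OF subspace_im subspace_im im_mpow_sub[OF j(1), where X=X]] dQ AB'(3) allr AB'(1) by simp
      have "mpow X j = mpow Y k"
        by (rule idem_eq[OF j(2) k(2)]) (use iQ AB'(3) iY iP kQ AB'(4) kY kP in simp_all)
      then have "mpow X j \<in> T" using PT by simp
      then show "X \<in> T" using pow_iff[OF iso j(1)] by blast
    qed
  qed
  note TS = this
  have hA: "\<forall>V\<in>?A. vec.subspace V \<and> vec.dim V = CARD('n) - 1"
  proof
    fix V assume "V \<in> ?A"
    then obtain X where "X \<in> T" "V = mat_image X" by blast
    then show "vec.subspace V \<and> vec.dim V = CARD('n) - 1" using allr subspace_im[of X] by simp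
  qed
  have hB: "\<forall>V\<in>?B. vec.subspace V \<and> vec.dim V = 1"
  proof
    fix V assume "V \<in> ?B"
    then obtain X where "X \<in> T" "V = mat_kernel X" by blast
    then show "vec.subspace V \<and> vec.dim V = 1" using dk subspace_ker[of X] by simp
  qed
  have hAB: "\<forall>V1\<in>?B. \<forall>V2\<in>?A. \<not> V1 \<subseteq> V2"
  proof (intro ballI)
    fix V1 V2 assume "V1 \<in> ?B" "V2 \<in> ?A"
    then obtain X Y where "X \<in> T" "V1 = mat_kernel X" "Y \<in> T" "V2 = mat_image Y" by blast
    then show "\<not> V1 \<subseteq> V2" using noninc by simp
  qed
  have ne: "?A \<noteq> {}" "?B \<noteq> {}" using Tne by auto
  show ?thesis
    by (rule exI[of _ ?A], rule exI[of _ ?B]) (intro conjI ne hA hB hAB TS)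
qed


lemma rank_set: "{A :: 'a::field^'n^'n. rank A \<le> CARD('n) - 1} = {A. \<not> invertible A}"
  using rank_le_iff by blast

theorem theorem28:
  fixes T :: "('a::{finite,field}^'n^'n) set"
  assumes "CARD('n) \<ge> 2"
  shows "isolated_subsemigroup T \<longleftrightarrow>
    (T = UNIV \<or>
     T = {A. invertible A} \<or>
     T = {A. rank A \<le> CARD('n) - 1} \<or>
     (\<exists>\<A> \<B>. \<A> \<noteq> {} \<and> \<B> \<noteq> {} \<and>
        (\<forall>V\<in>\<A>. vec.subspace V \<and> vec.dim V = CARD('n) - 1) \<and>
        (\<forall>V\<in>\<B>. vec.subspace V \<and> vec.dim V = 1) \<and>
        (\<forall>V1\<in>\<B>. \<forall>V2\<in>\<A>. \<not> V1 \<subseteq> V2) \<and>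
        T = S_sets \<A> \<B>))"
proof
  assume "T = UNIV \<or> T = {A. invertible A} \<or> T = {A. rank A \<le> CARD('n) - 1} \<or>
     (\<exists>\<A> \<B>. \<A> \<noteq> {} \<and> \<B> \<noteq> {} \<and>
        (\<forall>V\<in>\<A>. vec.subspace V \<and> vec.dim V = CARD('n) - 1) \<and>
        (\<forall>V\<in>\<B>. vec.subspace V \<and> vec.dim V = 1) \<and>
        (\<forall>V1\<in>\<B>. \<forall>V2\<in>\<A>. \<not> V1 \<subseteq> V2) \<and>
        T = S_sets \<A> \<B>)"
  then show "isolated_subsemigroup T"
  proof (elim disjE exE conjE)
    assume "T = UNIV" then show ?thesis using iso_UNIV by simp
  next
    assume "T = {A. invertible A}" then show ?thesis using iso_GL by simp
  next
    assume "T = {A. rank A \<le> CARD('n) - 1}" then show ?thesis using iso_sing rank_set by metis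
  next
    fix \<A> \<B> assume h: "\<A> \<noteq> {}" "\<B> \<noteq> {}" "\<forall>V\<in>\<A>. vec.subspace V \<and> vec.dim V = CARD('n) - 1"
      "\<forall>V\<in>\<B>. vec.subspace V \<and> vec.dim V = 1" "\<forall>V1\<in>\<B>. \<forall>V2\<in>\<A>. \<not> V1 \<subseteq> V2"
      "T = S_sets \<A> \<B>"
    then show ?thesis using iso_S[OF h(1-5)] by simp
  qed
next
  assume iso: "isolated_subsemigroup T"
  have GLsub: "X \<in> T" if "mat 1 \<in> T" "invertible X" for X
  proof -
    obtain k where k: "k > 0" "mpow X k ** mpow X k = mpow X k" using idem_pow by blast
    have "mpow X k = mat 1" using idem_inv[OF inv_mpow[OF that(2)] k(2)] .
    then show ?thesis using pow_iff[OF iso k(1), of X] that(1) by simp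
  qed
  have I_if_inv: "mat 1 \<in> T" if "X \<in> T" "invertible X" for X
  proof -
    obtain k where k: "k > 0" "mpow X k ** mpow X k = mpow X k" using idem_pow by blast
    have "mpow X k = mat 1" using idem_inv[OF inv_mpow[OF that(2)] k(2)] .
    then show ?thesis using pow_in[OF iso that(1) k(1)] by simp
  qed
  have all_if_zero: "\<not> invertible X \<Longrightarrow> X \<in> T" if "0 \<in> T" for X
    using sing_in[OF iso that] by blast
  have zero_from: "0 \<in> T" if "B \<in> T" "\<not> invertible B"
      "mat 1 \<in> T \<or> vec.dim (mat_image B) + 2 \<le> CARD('n)" for B
  proof -
    obtain k where k: "k > 0" "mpow B k ** mpow B k = mpow B k" using idem_pow by blast
    have ET: "mpow B k \<in> T" using pow_in[OF iso that(1) k(1)] .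
    have ni: "\<not> invertible (mpow B k)" using mpow_inv_D k(1) that(2) by blast
    have "vec.dim (mat_image (mpow B k)) \<le> vec.dim (mat_image B)"
      using vec.dim_subset[OF im_mpow_sub[OF k(1), where X=B]] .
    then have "mat 1 \<in> T \<or> vec.dim (mat_image (mpow B k)) + 2 \<le> CARD('n)" using that(3) by linarith
    then show ?thesis using zero_in[OF iso ET k(2) ni] by blast
  qed
  show "T = UNIV \<or> T = {A. invertible A} \<or> T = {A. rank A \<le> CARD('n) - 1} \<or>
     (\<exists>\<A> \<B>. \<A> \<noteq> {} \<and> \<B> \<noteq> {} \<and>
        (\<forall>V\<in>\<A>. vec.subspace V \<and> vec.dim V = CARD('n) - 1) \<and>
        (\<forall>V\<in>\<B>. vec.subspace V \<and> vec.dim V = 1) \<and>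
        (\<forall>V1\<in>\<B>. \<forall>V2\<in>\<A>. \<not> V1 \<subseteq> V2) \<and>
        T = S_sets \<A> \<B>)"
  proof (cases "mat 1 \<in> T")
    case True
    show ?thesis
    proof (cases "\<exists>B\<in>T. \<not> invertible B")
      case True
      then obtain B where "B \<in> T" "\<not> invertible B" by blast
      then have "0 \<in> T" using zero_from \<open>mat 1 \<in> T\<close> by blast
      have "X \<in> T" for X
      proof (cases "invertible X")
        case True then show ?thesis using GLsub \<open>mat 1 \<in> T\<close> by blast
      next
        case False then show ?thesis using all_if_zero \<open>0 \<in> T\<close> by blast
      qed
      then have "T = UNIV" by blast
      then show ?thesis by (rule disjI1)
    next
      case False
      have "X \<in> T \<longleftrightarrow> invertible X" for X
        using False GLsub \<open>mat 1 \<in> T\<close> by blast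
      then have "T = {A. invertible A}" by blast
      then show ?thesis by (intro disjI2 disjI1)
    qed
  next
    case False
    then have sing: "\<not> invertible X" if "X \<in> T" for X using I_if_inv that by blast
    show ?thesis
    proof (cases "\<exists>B\<in>T. vec.dim (mat_image B) + 2 \<le> CARD('n)")
      case True
      then obtain B where "B \<in> T" "vec.dim (mat_image B) + 2 \<le> CARD('n)" by blast
      then have "0 \<in> T" using zero_from sing by blast
      have "X \<in> T \<longleftrightarrow> \<not> invertible X" for X
        using all_if_zero[OF \<open>0 \<in> T\<close>] sing by blast
      then have "T = {A. \<not> invertible A}" by blast
      then have "T = {A. rank A \<le> CARD('n) - 1}" using rank_set[where 'a='a and 'n='n] by simp
      then show ?thesis by (intro disjI2 disjI1)
    next
      case False
      have "\<forall>X\<in>T. vec.dim (mat_image X) = CARD('n) - 1"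
      proof
        fix X assume X: "X \<in> T"
        have "vec.dim (mat_image X) \<noteq> CARD('n)" using sing[OF X] invertible_iff_dim_im by blast
        show "vec.dim (mat_image X) = CARD('n) - 1"
        proof -
          have "\<not> vec.dim (mat_image X) + 2 \<le> CARD('n)" using False X by blast
          then show ?thesis using \<open>vec.dim (mat_image X) \<noteq> CARD('n)\<close> dim_le_n[of "mat_image X"] by linarith
        qed
      qed
      then show ?thesis using forward_S[OF iso assms] by (intro disjI2)
    qed
  qed
qed

end
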